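(* There exist a formula $\phi$ of $\mathcal{D}(\mathsf{M})$, a structure $\mathfrak A$, a team $X$ over $\mathfrak A$ and a set of variables $V$ with $\mathrm{Fr}(\phi)\subseteq V\subseteq\mathrm{dom}(X)$ such that $\mathfrak A\models_{X\upharpoonright V}\phi$ but $\mathfrak A\not\models_X\phi$. That is, the truth of a $\mathcal{D}(\mathsf{M})$-formula in a team may depend on the values of variables that do not occur free in the formula.
   Context: All structures are finite. Dependence logic with majority, $\mathcal{D}(\mathsf{M})[\tau]$: formulas over a vocabulary $\tau$ in negation normal form, built from first-order literals (atomic formulas and negated atomic formulas), dependence atoms $=\!(t_1,\dots,t_n)$ ($t_i$ terms) and their negations $\neg=\!(t_1,\dots,t_n)$, using $\wedge$, $\vee$, $\exists x$, $\forall x$ and $\mathsf{M}x$. $\mathrm{Fr}(\phi)$ denotes the set of free variables, defined as in first-order logic ($\mathsf{M}x$ binds $x$), where the free variables of $=\!(t_1,\dots,t_n)$ are all variables occurring in $t_1,\dots,t_n$. A team $X$ over a structure $\mathfrak A$ with domain $A$ and with finite variable domain $\mathrm{dom}(X)$ is a set of assignments $s:\mathrm{dom}(X)\to A$. For $V\subseteq\mathrm{dom}(X)$, $X\upharpoonright V=\{s\upharpoonright V: s\in X\}$. For $F:X\to A$ let $X(F/x)=\{s(F(s)/x): s\in X\}$ and $X(A/x)=\{s(a/x): s\in X, a\in A\}$, where $s(a/x)$ agrees with $s$ except that it maps $x$ to $a$. Satisfaction $\mathfrak A\models_X\phi$ (for teams whose domain contains the free variables of $\phi$): for a first-order literal,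 every $s\in X$ satisfies it in the usual sense; $\mathfrak A\models_X =\!(t_1,\dots,t_n)$ iff any $s,s'\in X$ giving equal values to $t_1,\dots,t_{n-1}$ give equal values to $t_n$ ($=\!()$ is always true); $\mathfrak A\models_X\neg=\!(t_1,\dots,t_n)$ iff $X=\emptyset$; $\mathfrak A\models_X\psi\wedge\chi$ iff both hold; $\mathfrak A\models_X\psi\vee\chi$ iff $X=Y\cup Z$ with $\mathfrak A\models_Y\psi$ and $\mathfrak A\models_Z\chi$; $\mathfrak A\models_X\exists x\psi$ iff $\mathfrak A\models_{X(F/x)}\psi$ for some $F:X\to A$; $\mathfrak A\models_X\forall x\psi$ iff $\mathfrak A\models_{X(A/x)}\psi$; $\mathfrak A\models_X\mathsf{M}x\psi$ iff for at least $|A|^{|X|}/2$ many functions $F:X\to A$ we have $\mathfrak A\models_{X(F/x)}\psi$. *)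

theory Defs
  imports Main "HOL-Library.FuncSet"
begin

text \<open>Variables, function symbols and relation symbols are named by natural numbers.
  A vocabulary is implicit: a structure interprets every symbol name.\<close>

datatype trm = Var nat | Fn nat "trm list"

datatype fml =
    Eq trm trm
  | NEq trm trm
  | Rel nat "trm list"
  | NRel nat "trm list"
  | Dep "trm list"
  | NDep "trm list"
  | And fml fml
  | Or fml fml
  | Ex nat fml
  | All nat fml
  | Maj nat fml

fun tvars :: "trm \<Rightarrow> nat set" where
  "tvars (Var x) = {x}"
| "tvars (Fn f ts) = (\<Union>t\<in>set ts. tvars t)"

primrec fv :: "fml \<Rightarrow> nat set" where
  "fv (Eq t u) = tvars t \<union> tvars u"
| "fv (NEq t u) = tvars t \<union> tvars u"
| "fv (Rel R ts) = (\<Union>t\<in>set ts. tvars t)"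
| "fv (NRel R ts) = (\<Union>t\<in>set ts. tvars t)"
| "fv (Dep ts) = (\<Union>t\<in>set ts. tvars t)"
| "fv (NDep ts) = (\<Union>t\<in>set ts. tvars t)"
| "fv (And \<phi> \<psi>) = fv \<phi> \<union> fv \<psi>"
| "fv (Or \<phi> \<psi>) = fv \<phi> \<union> fv \<psi>"
| "fv (Ex x \<phi>) = fv \<phi> - {x}"
| "fv (All x \<phi>) = fv \<phi> - {x}"
| "fv (Maj x \<phi>) = fv \<phi> - {x}"

datatype 'a struc = Struc (sdom: "'a set") (sfun: "nat \<Rightarrow> 'a list \<Rightarrow> 'a") (srel: "nat \<Rightarrow> 'a list set")

definition is_struc :: "'a struc \<Rightarrow> bool" where
  "is_struc M \<longleftrightarrow> finite (sdom M) \<and> sdom M \<noteq> {} \<and>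
     (\<forall>f xs. set xs \<subseteq> sdom M \<longrightarrow> sfun M f xs \<in> sdom M)"

type_synonym 'a assign = "nat \<Rightarrow> 'a option"

definition is_team :: "'a struc \<Rightarrow> nat set \<Rightarrow> 'a assign set \<Rightarrow> bool" where
  "is_team M D X \<longleftrightarrow> finite D \<and> (\<forall>s\<in>X. dom s = D \<and> ran s \<subseteq> sdom M)"

definition restr_team :: "'a assign set \<Rightarrow> nat set \<Rightarrow> 'a assign set" where
  "restr_team X V = (\<lambda>s. s |` V) ` X"

fun eval :: "'a struc \<Rightarrow> 'a assign \<Rightarrow> trm \<Rightarrow> 'a" where
  "eval M s (Var x) = the (s x)"
| "eval M s (Fn f ts) = sfun M f (map (eval M s) ts)"

definition dep_holds :: "'a struc \<Rightarrow> trm list \<Rightarrow> 'a assign set \<Rightarrow> bool" where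
  "dep_holds M ts X \<longleftrightarrow> ts = [] \<or>
     (\<forall>s\<in>X. \<forall>s'\<in>X. map (eval M s) (butlast ts) = map (eval M s') (butlast ts)
        \<longrightarrow> eval M s (last ts) = eval M s' (last ts))"

definition supp :: "'a assign set \<Rightarrow> ('a assign \<Rightarrow> 'a) \<Rightarrow> nat \<Rightarrow> 'a assign set" where
  "supp X F x = (\<lambda>s. s(x \<mapsto> F s)) ` X"

definition dupl :: "'a struc \<Rightarrow> 'a assign set \<Rightarrow> nat \<Rightarrow> 'a assign set" where
  "dupl M X x = {s(x \<mapsto> a) | s a. s \<in> X \<and> a \<in> sdom M}"

primrec sat :: "'a struc \<Rightarrow> fml \<Rightarrow> 'a assign set \<Rightarrow> bool" where
  "sat M (Eq t u) X = (\<forall>s\<in>X. eval M s t = eval M s u)"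
| "sat M (NEq t u) X = (\<forall>s\<in>X. eval M s t \<noteq> eval M s u)"
| "sat M (Rel R ts) X = (\<forall>s\<in>X. map (eval M s) ts \<in> srel M R)"
| "sat M (NRel R ts) X = (\<forall>s\<in>X. map (eval M s) ts \<notin> srel M R)"
| "sat M (Dep ts) X = dep_holds M ts X"
| "sat M (NDep ts) X = (X = {})"
| "sat M (And \<phi> \<psi>) X = (sat M \<phi> X \<and> sat M \<psi> X)"
| "sat M (Or \<phi> \<psi>) X = (\<exists>Y Z. X = Y \<union> Z \<and> sat M \<phi> Y \<and> sat M \<psi> Z)"
| "sat M (Ex x \<phi>) X = (\<exists>F \<in> X \<rightarrow>\<^sub>E sdom M. sat M \<phi> (supp X F x))"
| "sat M (All x \<phi>) X = sat M \<phi> (dupl M X x)"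
| "sat M (Maj x \<phi>) X =
     (2 * card {F \<in> X \<rightarrow>\<^sub>E sdom M. sat M \<phi> (supp X F x)} \<ge> card (sdom M) ^ card X)"

end

theory Submission
  imports Defs
begin

definition MM :: "nat struc" where "MM = Struc {0,1} (\<lambda>f xs. 0) (\<lambda>R. {})"

lemma key: "{F \<in> X \<rightarrow>\<^sub>E sdom MM. sat MM (Eq (Var 1) (Fn 0 [])) (supp X F 1)}
   = {(\<lambda>s. if s \<in> X then 0 else undefined)}"
  by (auto simp: MM_def supp_def PiE_def extensional_def fun_eq_iff)

lemma satM: "sat MM (Maj 1 (Eq (Var 1) (Fn 0 []))) X \<longleftrightarrow> 2 ^ card X \<le> (2::nat)"
  using key[of X] by (simp add: MM_def numeral_2_eq_2)

theorem mainTheorem4: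
  shows "\<exists>(M :: nat struc) \<phi> D X V.
           is_struc M \<and> is_team M D X \<and> fv \<phi> \<subseteq> V \<and> V \<subseteq> D \<and>
           sat M \<phi> (restr_team X V) \<and> \<not> sat M \<phi> X"
proof -
  let ?X = "{[0 \<mapsto> (0::nat)], [0 \<mapsto> 1]}"
  have c2: "card ?X = 2" by (simp add: fun_eq_iff)
  have r: "restr_team ?X {} = {Map.empty}" by (simp add: restr_team_def)
  have "is_struc MM" by (simp add: MM_def is_struc_def)
  moreover have "is_team MM {0} ?X" by (auto simp: is_team_def MM_def)
  moreover have "sat MM (Maj 1 (Eq (Var 1) (Fn 0 []))) (restr_team ?X {})"
    by (simp only: satM r) simp
  moreover have "\<not> sat MM (Maj 1 (Eq (Var 1) (Fn 0 []))) ?X"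
    by (simp only: satM c2) simp
  ultimately show ?thesis by (intro exI[of _ MM] exI[of _ "Maj 1 (Eq (Var 1) (Fn 0 []))"]
      exI[of _ "{0}"] exI[of _ ?X] exI[of _ "{}"]) simp
qed

end
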